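(* Let $R$ and $S$ be two disjoint geometric trees in the plane whose vertices are in general position. Then their convex hulls $\mathrm{Conv}(R)$ and $\mathrm{Conv}(S)$ form a weakly disjoint pair.
   Context: A geometric tree is a plane straight-line embedding of a tree in $\mathbb{R}^2$, viewed as a subset of $\mathbb{R}^2$; disjoint means disjoint as point sets. Two convex polygons $P,Q$ form a weakly disjoint pair if $P\setminus Q$ and $Q\setminus P$ are both connected sets and $P$ and $Q$ share no vertex. The convex hull of a line segment is regarded as a valid degenerate convex polygon with two edges. *)

theory Defs
  imports "HOL-Analysis.Analysis"
begin

type_synonym pt = "real^2"

definition edge_rel :: "'a set set \<Rightarrow> ('a \<times> 'a) set" where
  "edge_rel E = {(a,b). {a,b} \<in> E}"

definition graph_connected :: "'a set \<Rightarrow> 'a set set \<Rightarrow> bool" where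
  "graph_connected V E \<longleftrightarrow> (\<forall>a\<in>V. \<forall>b\<in>V. (a,b) \<in> (edge_rel E)\<^sup>*)"

definition has_cycle :: "'a set set \<Rightarrow> bool" where
  "has_cycle E \<longleftrightarrow> (\<exists>vs. length vs \<ge> 3 \<and> distinct vs \<and>
      (\<forall>i < length vs. {vs ! i, vs ! ((i + 1) mod length vs)} \<in> E))"

definition is_tree :: "'a set \<Rightarrow> 'a set set \<Rightarrow> bool" where
  "is_tree V E \<longleftrightarrow> finite V \<and> V \<noteq> {} \<and>
     E \<subseteq> {{a,b} | a b. a \<in> V \<and> b \<in> V \<and> a \<noteq> b} \<and>
     graph_connected V E \<and> \<not> has_cycle E"

definition plane_straight_line :: "pt set \<Rightarrow> pt set set \<Rightarrow> bool" where
  "plane_straight_line V E \<longleftrightarrow>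
     (\<forall>e1\<in>E. \<forall>e2\<in>E. e1 \<noteq> e2 \<longrightarrow> convex hull e1 \<inter> convex hull e2 = e1 \<inter> e2) \<and>
     (\<forall>v\<in>V. \<forall>e\<in>E. v \<in> convex hull e \<longrightarrow> v \<in> e)"

definition geometric_tree :: "pt set \<Rightarrow> pt set set \<Rightarrow> bool" where
  "geometric_tree V E \<longleftrightarrow> is_tree V E \<and> plane_straight_line V E"

definition tree_points :: "pt set \<Rightarrow> pt set set \<Rightarrow> pt set" where
  "tree_points V E = V \<union> (\<Union>e\<in>E. convex hull e)"

definition general_position :: "pt set \<Rightarrow> bool" where
  "general_position P \<longleftrightarrow>
     (\<forall>a\<in>P. \<forall>b\<in>P. \<forall>c\<in>P. a \<noteq> b \<and> a \<noteq> c \<and> b \<noteq> c \<longrightarrow> \<not> collinear {a,b,c})"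

text \<open>Vertices of a (possibly degenerate) convex polygon are its extreme points.\<close>
definition weakly_disjoint_pair :: "pt set \<Rightarrow> pt set \<Rightarrow> bool" where
  "weakly_disjoint_pair P Q \<longleftrightarrow> connected (P - Q) \<and> connected (Q - P) \<and>
     \<not> (\<exists>v. v extreme_point_of P \<and> v extreme_point_of Q)"

end

theory Submission
  imports Defs
begin

lemma CLbox:
  fixes R S :: "(real^2) set"
  assumes pR: "path_connected R" and pS: "path_connected S" and dj: "R \<inter> S = {}"
    and r3: "r3 \<in> R" and r1: "r1 \<in> R"
    and Rx: "\<forall>r\<in>R. r3$1 \<le> r$1 \<and> r$1 \<le> r1$1"
    and Sx: "\<forall>s\<in>S. r3$1 \<le> s$1 \<and> s$1 \<le> r1$1"
    and q2: "q2 \<in> S" and top: "\<forall>z\<in>R\<union>S. z$2 \<le> q2$2"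
    and q4: "q4 \<in> S" and bneg: "\<beta> < 0"
    and sep: "\<forall>r\<in>R. \<alpha>*r$1+\<beta>*r$2 \<le> \<alpha>*q4$1 + \<beta>*q4$2"
    and low: "\<forall>z\<in>R\<union>S. L \<le> z$2"
  shows False
proof -
  obtain f where f: "path f" "path_image f \<subseteq> R" "pathstart f = r3" "pathfinish f = r1"
    using pR r3 r1 unfolding path_connected_def by blast
  obtain g2 where g2: "path g2" "path_image g2 \<subseteq> S" "pathstart g2 = q4" "pathfinish g2 = q2"
    using pS q4 q2 unfolding path_connected_def by blast
  define w :: "real^2" where "w = vector [q4$1, L]"
  define g where "g = linepath w q4 +++ g2"
  define a :: "real^2" where "a = vector [r3$1, L]"
  define b :: "real^2" where "b = vector [r1$1, q2$2]"
  have inbox: "z \<in> cbox a b" if "z \<in> R \<union> S" for z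
    using that Rx Sx top low by (auto simp: mem_box_cart a_def b_def forall_2)
  have w_in: "w \<in> cbox a b"
    using Sx q4 q2 low by (auto simp: mem_box_cart a_def b_def w_def forall_2)
  have seg: "closed_segment w q4 \<subseteq> cbox a b"
    using w_in inbox[of q4] q4 by (simp add: closed_segment_subset convex_box)
  have pg: "path g" using g2 by (simp add: g_def)
  have pig: "path_image g = closed_segment w q4 \<union> path_image g2"
    using g2 by (simp add: g_def path_image_join)
  obtain z where z1: "z \<in> path_image f" and z2: "z \<in> path_image g"
  proof (rule fashoda[of f g a b])
    show "path f" "path g" by (fact f(1)) (fact pg)
    show "path_image f \<subseteq> cbox a b" using f(2) inbox by blast
    show "path_image g \<subseteq> cbox a b" using pig seg g2(2) inbox by blast
    show "pathstart f $ 1 = a $ 1" using f by (simp add: a_def)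
    show "pathfinish f $ 1 = b $ 1" using f by (simp add: b_def)
    show "pathstart g $ 2 = a $ 2" by (simp add: g_def a_def w_def)
    show "pathfinish g $ 2 = b $ 2" using g2 by (simp add: g_def b_def)
  qed
  have zR: "z \<in> R" using z1 f by blast
  show False
  proof (cases "z \<in> path_image g2")
    case True thus False using g2 zR dj by blast
  next
    case False
    then have "z \<in> closed_segment w q4" using z2 pig by blast
    then obtain u where u: "0 \<le> u" "u \<le> 1" "z = (1 - u) *\<^sub>R w + u *\<^sub>R q4"
      unfolding in_segment by blast
    have Lq4: "L \<le> q4$2" using low q4 by blast
    have zc1: "z$1 = q4$1" using arg_cong[OF u(3), of "\<lambda>v. v$1"] by (simp add: w_def algebra_simps)
    have zc2: "z$2 = (1-u)*L + u*q4$2" using u by (simp add: w_def)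
    show False
    proof (cases "z$2 = q4$2")
      case True
      then have "z = q4" using zc1 by (simp add: vec_eq_iff forall_2)
      then show False using zR q4 dj by blast
    next
      case False
      have "(1-u)*L \<le> (1-u)*q4$2" using Lq4 u by (simp add: mult_left_mono)
      then have "z$2 \<le> q4$2" using zc2 by (simp add: algebra_simps)
      then have "z$2 < q4$2" using False by simp
      then have "\<beta>*z$2 > \<beta>*q4$2" using bneg by (simp add: mult_less_cancel_left_neg)
      then show False using sep zR zc1 by force
    qed
  qed
qed

definition dir :: "real \<Rightarrow> real^2" where "dir t = vector [cos t, sin t]"

lemma inner_dir: "x \<bullet> dir t = x$1 * cos t + x$2 * sin t"
  by (simp add: dir_def inner_vec_def sum_2)

lemma dir_pi: "dir (t + pi) = - dir t"
  by (simp add: dir_def vec_eq_iff forall_2)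

lemma dir_2pi: "dir (t + 2*pi) = dir t"
  by (simp add: dir_def vec_eq_iff forall_2)

definition hs :: "(real^2) set \<Rightarrow> real \<Rightarrow> real" where
  "hs X t = Sup ((\<lambda>x. x \<bullet> dir t) ` X)"

lemma hs_2pi: "hs X (t + 2*pi) = hs X t"
  by (simp add: hs_def dir_2pi)

lemma compact_img_dir: "compact X \<Longrightarrow> compact ((\<lambda>x. x \<bullet> dir t) ` X)"
  by (intro compact_continuous_image continuous_intros)

lemma hs_ge: "compact X \<Longrightarrow> x \<in> X \<Longrightarrow> x \<bullet> dir t \<le> hs X t"
  unfolding hs_def
  by (intro cSup_upper imageI bounded_imp_bdd_above compact_imp_bounded compact_img_dir)

lemma hs_attain: assumes "compact X" "X \<noteq> {}" shows "\<exists>x\<in>X. x \<bullet> dir t = hs X t"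
proof -
  obtain m where m: "m \<in> (\<lambda>x. x \<bullet> dir t) ` X" "\<forall>y\<in>(\<lambda>x. x \<bullet> dir t) ` X. y \<le> m"
    using compact_attains_sup[OF compact_img_dir[OF assms(1)]] assms(2) by blast
  then have "hs X t = m" unfolding hs_def by (intro cSup_eq_maximum) auto
  then show ?thesis using m by auto
qed

lemma inj_aux:
  assumes "x \<bullet> dir t = y \<bullet> dir t" "x \<bullet> dir u = y \<bullet> dir u" "sin (u - t) \<noteq> 0"
  shows "x = y"
proof -
  define d where "d = x - y"
  have e1: "d$1 * cos t + d$2 * sin t = 0" and e2: "d$1 * cos u + d$2 * sin u = 0"
    using assms(1,2) by (simp_all add: d_def inner_dir algebra_simps)
  have "d$1 * (sin u * cos t - cos u * sin t) = sin u * (d$1 * cos t + d$2 * sin t) - sin t * (d$1 * cos u + d$2 * sin u)"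
    by algebra
  then have "d$1 * sin (u - t) = 0" using e1 e2 by (simp add: sin_diff)
  then have d1: "d$1 = 0" using assms(3) by simp
  have "d$2 * (sin u * cos t - cos u * sin t) = cos t * (d$1 * cos u + d$2 * sin u) - cos u * (d$1 * cos t + d$2 * sin t)"
    by algebra
  then have "d$2 * sin (u - t) = 0" using e1 e2 by (simp add: sin_diff)
  then have d2: "d$2 = 0" using assms(3) by simp
  show ?thesis using d1 d2 by (simp add: d_def vec_eq_iff forall_2)
qed

lemma dir_decomp:
  "x \<bullet> dir v * sin (u - t) = sin (u - v) * (x \<bullet> dir t) + sin (v - t) * (x \<bullet> dir u)"
  by (simp add: inner_dir sin_diff algebra_simps)

lemma CL_dir:
  fixes R S :: "(real^2) set"
  assumes cR: "compact R" and cS: "compact S" and neR: "R \<noteq> {}" and neS: "S \<noteq> {}"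
    and pR: "path_connected R" and pS: "path_connected S" and dj: "R \<inter> S = {}"
    and h1: "hs S t \<le> hs R t" and h3: "hs S (t + pi) \<le> hs R (t + pi)"
    and u: "t < u" "u < t + pi" and hu: "hs R u \<le> hs S u"
    and v: "t + pi < v" "v < t + 2*pi" and hv: "hs R v \<le> hs S v"
  shows False
proof -
  define T where "T = (\<lambda>x::real^2. vector [x \<bullet> dir t, x \<bullet> dir u] :: real^2)"
  have T1: "(T x)$1 = x \<bullet> dir t" and T2: "(T x)$2 = x \<bullet> dir u" for x by (simp_all add: T_def)
  have contT: "continuous_on A T" for A
  proof -
    have "linear T"
      by (rule linearI) (simp_all add: T_def vec_eq_iff forall_2 inner_add_left)
    then show ?thesis by (simp add: linear_continuous_on linear_conv_bounded_linear)
  qed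
  have sig: "sin (u - t) > 0" using u by (intro sin_gt_zero) auto
  have sv: "sin (v - t) < 0"
  proof -
    have "sin (v - t - pi) > 0" using v by (intro sin_gt_zero) auto
    moreover have "sin (v - t - pi) = - sin (v - t)" by (simp add: sin_diff)
    ultimately show ?thesis by simp
  qed
  have injT: "x = y" if "T x = T y" for x y
    using that sig by (intro inj_aux[of x t y u]) (auto simp: T_def vec_eq_iff forall_2)
  have dpi: "x \<bullet> dir (t + pi) = - (x \<bullet> dir t)" for x by (simp add: dir_pi)
  obtain r1 where r1: "r1 \<in> R" "r1 \<bullet> dir t = hs R t" using hs_attain[OF cR neR] by blast
  obtain r3 where r3: "r3 \<in> R" "r3 \<bullet> dir (t+pi) = hs R (t+pi)" using hs_attain[OF cR neR] by blast
  obtain q2 where q2: "q2 \<in> S" "q2 \<bullet> dir u = hs S u" using hs_attain[OF cS neS] by blast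
  obtain q4 where q4: "q4 \<in> S" "q4 \<bullet> dir v = hs S v" using hs_attain[OF cS neS] by blast
  have "compact (T ` (R \<union> S))"
    using cR cS by (intro compact_continuous_image contT) auto
  then obtain B where B: "\<forall>z\<in>T ` (R \<union> S). norm z \<le> B"
    using compact_imp_bounded bounded_iff by metis
  define \<alpha> where "\<alpha> = sin (u - v) / sin (u - t)"
  define \<beta> where "\<beta> = sin (v - t) / sin (u - t)"
  have dv: "x \<bullet> dir v = \<alpha> * (T x)$1 + \<beta> * (T x)$2" for x
  proof -
    have "x \<bullet> dir v = (x \<bullet> dir v * sin (u - t)) / sin (u - t)" using sig by simp
    also have "\<dots> = \<alpha> * (T x)$1 + \<beta> * (T x)$2"
      unfolding dir_decomp T1 T2 \<alpha>_def \<beta>_def by (simp add: add_divide_distrib)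
    finally show ?thesis .
  qed
  show False
  proof (rule CLbox[of "T ` R" "T ` S" "T r3" "T r1" "T q2" "T q4" "\<beta>" "\<alpha>" "-B"])
    show "path_connected (T ` R)" "path_connected (T ` S)"
      using pR pS by (auto intro: path_connected_continuous_image contT)
    show "T ` R \<inter> T ` S = {}" using dj injT by auto
    show "T r3 \<in> T ` R" "T r1 \<in> T ` R" "T q2 \<in> T ` S" "T q4 \<in> T ` S"
      using r1 r3 q2 q4 by auto
    show "\<forall>r\<in>T ` R. T r3 $ 1 \<le> r $ 1 \<and> r $ 1 \<le> T r1 $ 1"
      using r1 r3 hs_ge[OF cR, of _ "t+pi"] hs_ge[OF cR, of _ t] by (fastforce simp: T1 dpi)
    show "\<forall>r\<in>T ` S. T r3 $ 1 \<le> r $ 1 \<and> r $ 1 \<le> T r1 $ 1"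
      using r1 r3 hs_ge[OF cS, of _ "t+pi"] hs_ge[OF cS, of _ t] h1 h3
      by (fastforce simp: T1 dpi)
    show "\<forall>z\<in>T ` R \<union> T ` S. z $ 2 \<le> T q2 $ 2"
      using q2 hs_ge[OF cS, of _ u] hs_ge[OF cR, of _ u] hu by (fastforce simp: T2)
    show "\<beta> < 0" using sig sv by (simp add: \<beta>_def divide_neg_pos)
    show "\<forall>r\<in>T ` R. \<alpha> * r $ 1 + \<beta> * r $ 2 \<le> \<alpha> * T q4 $ 1 + \<beta> * T q4 $ 2"
      using q4 hs_ge[OF cR, of _ v] hv by (fastforce simp: dv[symmetric])
    show "\<forall>z\<in>T ` R \<union> T ` S. - B \<le> z $ 2"
    proof
      fix z assume "z \<in> T ` R \<union> T ` S"
      then have "norm z \<le> B" using B by auto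
      moreover have "\<bar>z$2\<bar> \<le> norm z" by (rule component_le_norm_cart)
      ultimately show "- B \<le> z $ 2" by linarith
    qed
  qed
qed

lemma dir_int: "dir (t + 2*pi* of_int n) = dir t"
  by (simp add: dir_def vec_eq_iff forall_2 cos_add sin_add)

lemma hs_int: "hs X (t + 2*pi* of_int n) = hs X t"
  by (simp add: hs_def dir_int)

lemma hs_pi2: "hs X (t - 2*pi) = hs X t"
  using hs_int[of X "t - 2*pi" 1] by simp

lemma hs_bound:
  assumes "compact X" "X \<noteq> {}" "\<forall>x\<in>X. norm x \<le> B"
  shows "hs X t - hs X s \<le> B * (\<bar>cos t - cos s\<bar> + \<bar>sin t - sin s\<bar>)"
proof -
  obtain x where x: "x \<in> X" "x \<bullet> dir t = hs X t" using hs_attain[OF assms(1,2)] by blast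
  have "x \<bullet> dir t - x \<bullet> dir s = x$1 * (cos t - cos s) + x$2 * (sin t - sin s)"
    by (simp add: inner_dir algebra_simps)
  also have "\<dots> \<le> \<bar>x$1\<bar> * \<bar>cos t - cos s\<bar> + \<bar>x$2\<bar> * \<bar>sin t - sin s\<bar>"
    by (metis abs_ge_self abs_mult add_mono)
  also have "\<dots> \<le> B * \<bar>cos t - cos s\<bar> + B * \<bar>sin t - sin s\<bar>"
  proof -
    have "\<bar>x$1\<bar> \<le> B" "\<bar>x$2\<bar> \<le> B"
      using component_le_norm_cart[of x] assms(3) x(1) by (meson order_trans)+
    then show ?thesis by (intro add_mono mult_right_mono) auto
  qed
  finally have "x \<bullet> dir t - x \<bullet> dir s \<le> B * (\<bar>cos t - cos s\<bar> + \<bar>sin t - sin s\<bar>)"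
    by (simp add: algebra_simps)
  moreover have "x \<bullet> dir s \<le> hs X s" by (rule hs_ge[OF assms(1) x(1)])
  ultimately show ?thesis using x by linarith
qed

lemma hs_cont:
  assumes "compact X" "X \<noteq> {}"
  shows "continuous_on A (hs X)"
proof -
  obtain B where B: "\<forall>x\<in>X. norm x \<le> B"
    using compact_imp_bounded[OF assms(1)] bounded_iff by metis
  have "isCont (hs X) t0" for t0
  proof -
    have lim0: "((\<lambda>s. B * (\<bar>cos s - cos t0\<bar> + \<bar>sin s - sin t0\<bar>)) \<longlongrightarrow> 0) (at t0)"
    proof -
      have "((\<lambda>s. B * (\<bar>cos s - cos t0\<bar> + \<bar>sin s - sin t0\<bar>)) \<longlongrightarrow>
              B * (\<bar>cos t0 - cos t0\<bar> + \<bar>sin t0 - sin t0\<bar>)) (at t0)"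
        by (intro tendsto_intros continuous_on_tendsto_compose) (auto intro!: tendsto_intros)
      then show ?thesis by simp
    qed
    have "((\<lambda>s. hs X s - hs X t0) \<longlongrightarrow> 0) (at t0)"
    proof (rule Lim_null_comparison[OF _ lim0])
      show "\<forall>\<^sub>F s in at t0. norm (hs X s - hs X t0) \<le> B * (\<bar>cos s - cos t0\<bar> + \<bar>sin s - sin t0\<bar>)"
      proof (intro always_eventually allI)
        fix s
        have 1: "hs X s - hs X t0 \<le> B * (\<bar>cos s - cos t0\<bar> + \<bar>sin s - sin t0\<bar>)"
          by (rule hs_bound[OF assms B])
        have 2: "hs X t0 - hs X s \<le> B * (\<bar>cos t0 - cos s\<bar> + \<bar>sin t0 - sin s\<bar>)"
          by (rule hs_bound[OF assms B])
        have "\<bar>cos t0 - cos s\<bar> = \<bar>cos s - cos t0\<bar>" "\<bar>sin t0 - sin s\<bar> = \<bar>sin s - sin t0\<bar>" by auto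
        then show "norm (hs X s - hs X t0) \<le> B * (\<bar>cos s - cos t0\<bar> + \<bar>sin s - sin t0\<bar>)"
          using 1 2 by (simp add: abs_le_iff)
      qed
    qed
    then show ?thesis unfolding isCont_def by (simp add: LIM_zero_iff)
  qed
  then show ?thesis by (simp add: continuous_at_imp_continuous_on)
qed

lemma shift_window: "\<exists>n::int. s \<le> x + 2*pi* of_int n \<and> x + 2*pi* of_int n < s + 2*pi"
proof -
  define n where "n = \<lceil>(s - x) / (2*pi)\<rceil>"
  have "(s - x) / (2*pi) \<le> of_int n" "of_int n < (s - x) / (2*pi) + 1"
    unfolding n_def by linarith+
  then have "s - x \<le> 2*pi* of_int n" "2*pi* of_int n < s - x + 2*pi"
    using pi_gt_zero by (simp_all add: divide_le_eq less_divide_eq field_simps)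
  then show ?thesis by (intro exI[of _ n]) auto
qed

lemma window:
  fixes X Y :: "real \<Rightarrow> bool"
  assumes perX: "\<And>t n. X (t + 2*pi* of_int n) = X t"
    and perY: "\<And>t n. Y (t + 2*pi* of_int n) = Y t"
    and pat: "x1 < y1" "y1 < x2" "x2 < y2" "y2 < x1 + 2*pi"
    and XY: "X x1" "Y y1" "X x2" "Y y2"
    and noX: "\<And>w. s + pi < w \<Longrightarrow> w < s + 2*pi \<Longrightarrow> \<not> X w"
  shows "\<exists>b a b'. s \<le> b \<and> b < a \<and> a < b' \<and> b' \<le> s + pi \<and> X b \<and> Y a \<and> X b'"
proof -
  obtain n :: int where n: "s \<le> x1 + 2*pi* of_int n" "x1 + 2*pi* of_int n < s + 2*pi"
    using shift_window by blast
  define c where "c = 2*pi* of_int n"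
  have Xc: "X (t + c) = X t" and Yc: "Y (t + c) = Y t" for t
    unfolding c_def using perX perY by auto
  have Xm: "X (t - 2*pi) = X t" and Ym: "Y (t - 2*pi) = Y t" for t
    using perX[of "t - 2*pi" 1] perY[of "t - 2*pi" 1] by auto
  have X1: "X (x1 + c)" "X (x2 + c)" and Y1: "Y (y1 + c)" "Y (y2 + c)"
    using XY Xc Yc by auto
  have x1w: "x1 + c \<le> s + pi" using noX[of "x1 + c"] X1 n unfolding c_def by force
  show ?thesis
  proof (cases "x2 + c < s + 2*pi")
    case True
    then have "x2 + c \<le> s + pi" using noX[of "x2 + c"] X1 by force
    then show ?thesis using n pat X1 Y1 unfolding c_def[symmetric]
      by (intro exI[of _ "x1 + c"] exI[of _ "y1 + c"] exI[of _ "x2 + c"]) auto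
  next
    case False
    have X2: "X (x2 + c - 2*pi)" using Xm X1 by simp
    have Y2: "Y (y2 + c - 2*pi)" using Ym Y1 by simp
    have "x2 + c - 2*pi \<le> s + pi"
      using noX[of "x2 + c - 2*pi"] X2 False pat n unfolding c_def[symmetric] by force
    then show ?thesis using n pat X2 Y2 X1 False x1w unfolding c_def[symmetric]
      by (intro exI[of _ "x2 + c - 2*pi"] exI[of _ "y2 + c - 2*pi"] exI[of _ "x1 + c"]) auto
  qed
qed

lemma pattern_false:
  fixes R S :: "(real^2) set"
  assumes cR: "compact R" and cS: "compact S" and neR: "R \<noteq> {}" and neS: "S \<noteq> {}"
    and pR: "path_connected R" and pS: "path_connected S" and dj: "R \<inter> S = {}"
    and pat: "a1 < b1" "b1 < a2" "a2 < b2" "b2 < a1 + 2*pi"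
    and ga: "hs S a1 < hs R a1" "hs S a2 < hs R a2"
    and gb: "hs R b1 \<le> hs S b1" "hs R b2 \<le> hs S b2"
  shows False
proof -
  define g where "g t = hs R t - hs S t" for t
  have contg: "continuous_on A g" for A
    unfolding g_def by (intro continuous_on_diff hs_cont cR cS neR neS)
  have gint: "g (t + 2*pi * of_int n) = g t" for t n by (simp add: g_def hs_int)
  have g2: "g (t + 2*pi) = g t" for t using gint[of t 1] by simp
  have gm: "g (t - 2*pi) = g t" for t using gint[of t "-1"] by simp
  define k where "k t = g t - g (t + pi)" for t
  have contk: "continuous_on A k" for A
    unfolding k_def by (intro continuous_on_diff contg continuous_on_compose2[OF contg]) (auto intro!: continuous_intros)
  have kpi: "k pi = - k 0" unfolding k_def using g2[of 0] by simp
  obtain t0 where t0: "g t0 = g (t0 + pi)"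
  proof (cases "k 0 \<le> 0")
    case True
    then obtain x where "k x = 0" using IVT'[of k 0 0 pi] contk kpi by auto
    then show ?thesis using that unfolding k_def by simp
  next
    case False
    then obtain x where "k x = 0" using IVT2'[of k pi 0 0] contk kpi by auto
    then show ?thesis using that unfolding k_def by simp
  qed
  show False
  proof (cases "g t0 \<ge> 0")
    case True
    show False
    proof (cases "(\<exists>u. t0 < u \<and> u < t0 + pi \<and> g u \<le> 0) \<and> (\<exists>v. t0 + pi < v \<and> v < t0 + 2*pi \<and> g v \<le> 0)")
      case True
      then obtain u v where uv: "t0 < u" "u < t0 + pi" "g u \<le> 0" "t0 + pi < v" "v < t0 + 2*pi" "g v \<le> 0"
        by blast
      show False
        by (rule CL_dir[OF cR cS neR neS pR pS dj, of t0 u v])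
           (use uv \<open>g t0 \<ge> 0\<close> t0 in \<open>auto simp: g_def\<close>)
    next
      case False
      obtain s where noX: "\<And>w. s + pi < w \<Longrightarrow> w < s + 2*pi \<Longrightarrow> \<not> g w \<le> 0"
      proof (cases "\<exists>u. t0 < u \<and> u < t0 + pi \<and> g u \<le> 0")
        case True
        then have "\<forall>v. t0 + pi < v \<and> v < t0 + 2*pi \<longrightarrow> g v > 0" using False by force
        then show ?thesis using that[of t0] by force
      next
        case False
        have "\<not> g w \<le> 0" if "t0 + pi + pi < w" "w < t0 + pi + 2*pi" for w
          using False that gm[of w] by (metis add.commute diff_less_eq less_diff_eq not_le
              add_diff_cancel_left' diff_add_eq mult_2 ab_semigroup_add_class.add_ac(1))
        then show ?thesis using that[of "t0 + pi"] by blast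
      qed
      obtain b a b' where w: "s \<le> b" "b < a" "a < b'" "b' \<le> s + pi" "g b \<le> 0" "g a > 0" "g b' \<le> 0"
      proof -
        have "g (a1 + 2*pi) > 0" using g2 ga by (simp add: g_def)
        moreover have "g b1 \<le> 0" "g a2 > 0" "g b2 \<le> 0" using ga gb by (auto simp: g_def)
        ultimately have "\<exists>b a b'. s \<le> b \<and> b < a \<and> a < b' \<and> b' \<le> s + pi \<and> g b \<le> 0 \<and> g a > 0 \<and> g b' \<le> 0"
          using pat by (intro window[of "\<lambda>t. g t \<le> 0" "\<lambda>t. g t > 0" b1 a2 b2 "a1 + 2*pi" s] noX)
            (auto simp: gint)
        then show ?thesis using that by blast
      qed
      have "g (a + pi) > 0" using noX[of "a + pi"] w by auto
      moreover have "g (b + 2*pi) \<le> 0" using w g2 by simp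
      ultimately show False
        using CL_dir[OF cR cS neR neS pR pS dj, of a b' "b + 2*pi"] w
        by (auto simp: g_def)
    qed
  next
    case False
    show False
    proof (cases "(\<exists>u. t0 < u \<and> u < t0 + pi \<and> g u > 0) \<and> (\<exists>v. t0 + pi < v \<and> v < t0 + 2*pi \<and> g v > 0)")
      case True
      then obtain u v where uv: "t0 < u" "u < t0 + pi" "g u > 0" "t0 + pi < v" "v < t0 + 2*pi" "g v > 0"
        by blast
      show False
        by (rule CL_dir[OF cS cR neS neR pS pR _, of t0 u v])
           (use uv \<open>\<not> g t0 \<ge> 0\<close> t0 dj in \<open>auto simp: g_def\<close>)
    next
      case False
      obtain s where noX: "\<And>w. s + pi < w \<Longrightarrow> w < s + 2*pi \<Longrightarrow> \<not> g w > 0"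
      proof (cases "\<exists>u. t0 < u \<and> u < t0 + pi \<and> g u > 0")
        case True
        then have "\<forall>v. t0 + pi < v \<and> v < t0 + 2*pi \<longrightarrow> g v \<le> 0" using False by force
        then show ?thesis using that[of t0] by force
      next
        case False
        have "\<not> g w > 0" if "t0 + pi + pi < w" "w < t0 + pi + 2*pi" for w
          using False that gm[of w] by (metis add.commute diff_less_eq less_diff_eq not_le
              add_diff_cancel_left' diff_add_eq mult_2 ab_semigroup_add_class.add_ac(1))
        then show ?thesis using that[of "t0 + pi"] by blast
      qed
      obtain b a b' where w: "s \<le> b" "b < a" "a < b'" "b' \<le> s + pi" "g b > 0" "g a \<le> 0" "g b' > 0"
      proof -
        have "g a1 > 0" "g b1 \<le> 0" "g a2 > 0" "g b2 \<le> 0" using ga gb by (auto simp: g_def)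
        then have "\<exists>b a b'. s \<le> b \<and> b < a \<and> a < b' \<and> b' \<le> s + pi \<and> g b > 0 \<and> g a \<le> 0 \<and> g b' > 0"
          using pat by (intro window[of "\<lambda>t. g t > 0" "\<lambda>t. g t \<le> 0" a1 b1 a2 b2 s] noX)
            (auto simp: gint)
        then show ?thesis using that by blast
      qed
      have "g (a + pi) \<le> 0" using noX[of "a + pi"] w by auto
      moreover have "g (b + 2*pi) > 0" using w g2 by simp
      ultimately show False
        using CL_dir[OF cS cR neS neR pS pR _, of a b' "b + 2*pi"] w dj
        by (auto simp: g_def)
    qed
  qed
qed

lemma hull_le_hs: assumes "compact X" "p \<in> convex hull X" shows "p \<bullet> dir t \<le> hs X t"
proof -
  have "convex hull X \<subseteq> {y. dir t \<bullet> y \<le> hs X t}"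
    using hs_ge[OF assms(1)] by (intro hull_minimal convex_halfspace_le) (auto simp: inner_commute)
  then show ?thesis using assms(2) by (auto simp: inner_commute)
qed

lemma polar: fixes w :: "real^2" assumes "w \<noteq> 0" shows "\<exists>t. w = norm w *\<^sub>R dir t"
proof -
  have n: "norm w > 0" using assms by simp
  have "w \<bullet> w = w$1 * w$1 + w$2 * w$2" by (simp add: inner_vec_def sum_2)
  then have "(w$1)^2 + (w$2)^2 = (norm w)^2" by (simp add: dot_square_norm power2_eq_square)
  then have "(w$1 / norm w)^2 + (w$2 / norm w)^2 = 1"
    using n by (simp add: power_divide add_divide_distrib[symmetric])
  then obtain t where "w$1 / norm w = cos t" "w$2 / norm w = sin t"
    using sincos_total_2pi by metis
  then have "w$1 = norm w * cos t" "w$2 = norm w * sin t" using n by (simp_all add: field_simps)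
  then show ?thesis by (intro exI[of _ t]) (simp add: dir_def vec_eq_iff forall_2)
qed

lemma diff_connected:
  fixes R S :: "(real^2) set"
  assumes cR: "compact R" and cS: "compact S" and neR: "R \<noteq> {}" and neS: "S \<noteq> {}"
    and pR: "path_connected R" and pS: "path_connected S" and dj: "R \<inter> S = {}"
  shows "connected (convex hull R - convex hull S)"
proof -
  define P where "P = convex hull R"
  define Q where "Q = convex hull S"
  define C where "C t = {p \<in> P. hs S t < p \<bullet> dir t}" for t
  have CPQ: "C t \<subseteq> P - Q" for t
  proof
    fix p assume "p \<in> C t"
    then have "p \<in> P" "hs S t < p \<bullet> dir t" by (auto simp: C_def)
    moreover have "p \<notin> Q" using hull_le_hs[OF cS, of p t] \<open>hs S t < p \<bullet> dir t\<close> by (auto simp: Q_def)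
    ultimately show "p \<in> P - Q" by blast
  qed
  have Cconv: "convex (C t)" for t
  proof -
    have "C t = P \<inter> {p. dir t \<bullet> p > hs S t}" by (auto simp: C_def inner_commute)
    then show ?thesis by (simp add: P_def convex_Int convex_halfspace_gt)
  qed
  have Ccc: "connected_component (P - Q) p q" if "p \<in> C t" "q \<in> C t" for p q t
    unfolding connected_component_def
    using that CPQ Cconv convex_connected by blast
  have Cper: "C (t + 2*pi * of_int n) = C t" for t n by (simp add: C_def hs_int dir_int)
  have Cpos: "hs S t < hs R t" if "p \<in> C t" for p t
    using that hull_le_hs[OF cR, of p t] by (auto simp: C_def P_def)
  have Cin: "\<exists>t. x \<in> C t" if xPQ: "x \<in> P - Q" for x
  proof -
    have "convex Q" "closed Q" using cS by (simp_all add: Q_def compact_convex_hull compact_imp_closed)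
    then obtain a b where ab: "a \<bullet> x < b" "\<forall>y\<in>Q. a \<bullet> y > b"
      using separating_hyperplane_closed_point[of Q x] xPQ by blast
    obtain y0 where y0: "y0 \<in> S" using neS by blast
    then have "y0 \<in> Q" unfolding Q_def by (simp add: hull_inc)
    then have "a \<noteq> 0" using ab by auto
    then obtain t where t: "-a = norm a *\<^sub>R dir t" using polar[of "-a"] by auto
    have na: "norm a > 0" using \<open>a \<noteq> 0\<close> by simp
    obtain y where y: "y \<in> S" "y \<bullet> dir t = hs S t" using hs_attain[OF cS neS] by blast
    have "y \<in> Q" using y unfolding Q_def by (simp add: hull_inc)
    then have "a \<bullet> y > a \<bullet> x" using ab by force
    then have "norm a * (y \<bullet> dir t) < norm a * (x \<bullet> dir t)"
      using arg_cong[OF t, of "\<lambda>v. v \<bullet> y"] arg_cong[OF t, of "\<lambda>v. v \<bullet> x"]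
      by (simp add: inner_commute)
    then have "y \<bullet> dir t < x \<bullet> dir t" using na by simp
    then show ?thesis using y xPQ by (auto simp: C_def)
  qed
  have chain: "connected_component (P - Q) p q"
    if t12: "t1 \<le> t2" and pos: "\<forall>t\<in>{t1..t2}. hs S t < hs R t" and p: "p \<in> C t1" and q: "q \<in> C t2"
    for t1 t2 p q
  proof -
    have "(\<lambda>t. \<forall>q\<in>C t. connected_component (P - Q) p q) t2"
    proof (rule connected_induction_simple[of "{t1..t2}" t1 t2])
      show "connected {t1..t2}" by simp
      show "t1 \<in> {t1..t2}" "t2 \<in> {t1..t2}" using t12 by auto
      show "\<forall>q\<in>C t1. connected_component (P - Q) p q" using p Ccc by blast
      fix a assume a: "a \<in> {t1..t2}"
      obtain e where e: "e \<in> R" "e \<bullet> dir a = hs R a" using hs_attain[OF cR neR] by blast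
      define N where "N = {s. hs S s < e \<bullet> dir s}"
      have "open N" unfolding N_def
        by (intro open_Collect_less hs_cont cS neS) (auto simp: inner_dir intro!: continuous_intros)
      have eC: "e \<in> C s" if "s \<in> N" for s
        using that e(1) by (auto simp: C_def N_def P_def hull_inc)
      show "\<exists>T. openin (top_of_set {t1..t2}) T \<and> a \<in> T \<and>
              (\<forall>x\<in>T. \<forall>y\<in>T. (\<forall>q\<in>C x. connected_component (P - Q) p q) \<longrightarrow>
                         (\<forall>q\<in>C y. connected_component (P - Q) p q))"
      proof (intro exI[of _ "{t1..t2} \<inter> N"] conjI ballI impI)
        show "openin (top_of_set {t1..t2}) ({t1..t2} \<inter> N)"
          using \<open>open N\<close> by (simp add: openin_open_Int)
        show "a \<in> {t1..t2} \<inter> N" using a pos e by (auto simp: N_def)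
        fix x y q assume x: "x \<in> {t1..t2} \<inter> N" and y: "y \<in> {t1..t2} \<inter> N"
          and H: "\<forall>q\<in>C x. connected_component (P - Q) p q" and q: "q \<in> C y"
        have "connected_component (P - Q) p e" using H eC x by blast
        moreover have "connected_component (P - Q) e q" using Ccc eC y q by blast
        ultimately show "connected_component (P - Q) p q"
          by (rule connected_component_trans)
      qed
    qed
    then show ?thesis using q by blast
  qed
  show ?thesis
    unfolding P_def[symmetric] Q_def[symmetric] connected_iff_connected_component
  proof (intro ballI)
    fix x y assume x: "x \<in> P - Q" and y: "y \<in> P - Q"
    obtain t1 where t1: "x \<in> C t1" using Cin x by blast
    obtain t2' where t2': "y \<in> C t2'" using Cin y by blast
    obtain n :: int where n: "t1 \<le> t2' + 2*pi * of_int n" "t2' + 2*pi * of_int n < t1 + 2*pi"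
      using shift_window by blast
    define t2 where "t2 = t2' + 2*pi * of_int n"
    have t2: "y \<in> C t2" using t2' Cper unfolding t2_def by simp
    have t1': "x \<in> C (t1 + 2*pi)" using t1 Cper[of t1 1] by simp
    have g1: "hs S t1 < hs R t1" and g2: "hs S t2 < hs R t2" using Cpos t1 t2 by auto
    show "connected_component (P - Q) x y"
    proof (cases "\<forall>t\<in>{t1..t2}. hs S t < hs R t")
      case True
      then show ?thesis using chain[of t1 t2 x y] n t1 t2 unfolding t2_def by auto
    next
      case F1: False
      show ?thesis
      proof (cases "\<forall>t\<in>{t2..t1 + 2*pi}. hs S t < hs R t")
        case True
        then have "connected_component (P - Q) y x" using chain[of t2 "t1 + 2*pi" y x] n t1' t2
          unfolding t2_def by auto
        then show ?thesis by (simp add: connected_component_sym)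
      next
        case F2: False
        obtain b1 where b1: "t1 \<le> b1" "b1 \<le> t2" "hs R b1 \<le> hs S b1" using F1 by force
        obtain b2 where b2: "t2 \<le> b2" "b2 \<le> t1 + 2*pi" "hs R b2 \<le> hs S b2" using F2 by force
        have "t1 < b1" using b1 g1 by (cases "t1 = b1") auto
        moreover have "b1 < t2" using b1 g2 by (cases "b1 = t2") auto
        moreover have "t2 < b2" using b2 g2 by (cases "b2 = t2") auto
        moreover have "b2 < t1 + 2*pi"
          using b2 g1 hs_2pi[of R t1] hs_2pi[of S t1] by (cases "b2 = t1 + 2*pi") auto
        ultimately show ?thesis
          using pattern_false[OF cR cS neR neS pR pS dj, of t1 b1 t2 b2] g1 g2 b1 b2 by auto
      qed
    qed
  qed
qed

lemma tree_facts:
  assumes "geometric_tree V E"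
  shows "compact (tree_points V E)" "tree_points V E \<noteq> {}" "path_connected (tree_points V E)"
proof -
  have fV: "finite V" and neV: "V \<noteq> {}" and Esub: "E \<subseteq> {{a,b} | a b. a \<in> V \<and> b \<in> V \<and> a \<noteq> b}"
    and gc: "graph_connected V E"
    using assms by (auto simp: geometric_tree_def is_tree_def)
  have EP: "E \<subseteq> Pow V" using Esub by auto
  then have fE: "finite E" using fV by (meson finite_Pow_iff finite_subset)
  have fe: "finite e" if "e \<in> E" for e using that EP fV by (meson PowD finite_subset subsetD)
  define TP where "TP = tree_points V E"
  have TPd: "TP = V \<union> (\<Union>e\<in>E. convex hull e)" by (simp add: TP_def tree_points_def)
  show "compact (tree_points V E)"
    unfolding TP_def[symmetric] TPd
    using fV fE fe by (intro compact_Un finite_imp_compact compact_UN compact_convex_hull) auto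
  show "tree_points V E \<noteq> {}" using neV by (auto simp: tree_points_def)
  have VTP: "V \<subseteq> TP" by (auto simp: TPd)
  have seg: "closed_segment a b \<subseteq> TP" if "{a,b} \<in> E" for a b
    using that by (auto simp: TPd segment_convex_hull)
  have vv: "path_component TP a b" if "a \<in> V" "(a,b) \<in> (edge_rel E)\<^sup>*" for a b
    using that(2)
  proof (induction rule: rtrancl_induct)
    case base then show ?case using that(1) VTP by (auto intro: path_component_refl)
  next
    case (step y z)
    then have "{y,z} \<in> E" by (simp add: edge_rel_def)
    then have "path_component TP y z" using seg by (intro path_component_linepath) auto
    then show ?case using step.IH by (rule path_component_trans[rotated])
  qed
  have xv: "\<exists>v\<in>V. path_component TP x v" if xTP: "x \<in> TP" for x
  proof (cases "x \<in> V")
    case True then show ?thesis using VTP by (auto intro: path_component_refl)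
  next
    case False
    then obtain e where e: "e \<in> E" "x \<in> convex hull e" using xTP by (auto simp: TPd)
    then obtain a b where ab: "e = {a,b}" "a \<in> V" using Esub by blast
    have "x \<in> closed_segment a b" using e ab by (simp add: segment_convex_hull)
    then have "closed_segment x a \<subseteq> closed_segment a b"
      by (simp add: closed_segment_subset convex_closed_segment)
    then have "path_component TP x a" using seg[of a b] e ab by (intro path_component_linepath) auto
    then show ?thesis using ab by blast
  qed
  show "path_connected (tree_points V E)"
    unfolding TP_def[symmetric] path_connected_component
  proof (intro ballI)
    fix x y assume "x \<in> TP" "y \<in> TP"
    then obtain v w where v: "v \<in> V" "path_component TP x v" and w: "w \<in> V" "path_component TP y w"
      using xv by blast
    have "path_component TP v w" using vv gc v w by (auto simp: graph_connected_def)
    then show "path_component TP x y"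
      using v w by (meson path_component_sym path_component_trans)
  qed
qed

theorem lemma4:
  fixes VR VS :: "pt set" and ER ES :: "pt set set"
  assumes "geometric_tree VR ER" and "geometric_tree VS ES"
    and "tree_points VR ER \<inter> tree_points VS ES = {}"
    and "general_position (VR \<union> VS)"
  shows "weakly_disjoint_pair (convex hull (tree_points VR ER)) (convex hull (tree_points VS ES))"
proof -
  note R = tree_facts[OF assms(1)] and S = tree_facts[OF assms(2)]
  have dj2: "tree_points VS ES \<inter> tree_points VR ER = {}" using assms(3) by blast
  show ?thesis unfolding weakly_disjoint_pair_def
  proof (intro conjI)
    show "connected (convex hull tree_points VR ER - convex hull tree_points VS ES)"
      by (rule diff_connected[OF R(1) S(1) R(2) S(2) R(3) S(3) assms(3)])
    show "connected (convex hull tree_points VS ES - convex hull tree_points VR ER)"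
      by (rule diff_connected[OF S(1) R(1) S(2) R(2) S(3) R(3) dj2])
    show "\<not> (\<exists>v. v extreme_point_of convex hull tree_points VR ER \<and>
                v extreme_point_of convex hull tree_points VS ES)"
      using extreme_point_of_convex_hull assms(3) by blast
  qed
qed

end
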